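(* Let $\Gamma$ be a finitely generated stable LEF group, $\pi:\mathbb{F}\twoheadrightarrow\Gamma$ an epimorphism from a free group on a finite basis $X$, $S=\pi(X)$, and suppose there exists $C\ge1$ such that $F_\Gamma^\pi(x)\le Cx^C$ for all $x\ge1$. Then there exists $C'>0$ such that for every positive integer $l$, $\mathcal{L}_\Gamma^S(C'l^C)!\ge\mathcal{R}_\Gamma^S(l)$.
   Context: For finite $\Omega$, $d_\Omega(\sigma,\tau)=|\{\omega:\sigma(\omega)\ne\tau(\omega)\}|/|\Omega|$. A pair $(\delta,E)$, $\delta\in(0,1]$, $E\subseteq\ker\pi$ finite, is valid for $\epsilon>0$ if for every finite $\Omega$ and homomorphism $\rho:\mathbb{F}\to\mathrm{Sym}(\Omega)$ with $d_\Omega(\rho(r),\mathrm{id})<\delta$ for all $r\in E$ there is a homomorphism $\phi:\Gamma\to\mathrm{Sym}(\Omega)$ with $d_\Omega(\rho(x),\phi(\pi(x)))<\epsilon$ for all $x\in X$; $\Gamma$ is stable if valid pairs exist for all $\epsilon$. $F_\Gamma^\pi(x)=\inf\{\|E\|/\delta:(\delta,E)\text{ valid for }1/x\}$, $\|E\|=\sum_{r\in E}|r|$. $B_S(t)$ is the ball of radius $t$ in the word metric of $S$. A local embedding of $A\subseteq\Gamma$ into a group $\Delta$ is an injective map $\psi$ with $\psi(gh)=\psi(g)\psi(h)$ whenever $g,h,gh\in A$; $\Gamma$ is LEF if every finite subset locally embeds in a finite group. $\mathcal{L}_\Gamma^S(t)$ is the minimal order of a finite group admitting a local embedding of $B_S(t)$;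 $\mathcal{R}_\Gamma^S(l)$ is the minimal order of a finite group $\Delta$ with a homomorphism $\Gamma\to\Delta$ injective on $B_S(l)$. *)

theory Defs
  imports "HOL-Algebra.Algebra" Complex_Main
begin

text \<open>A letter (x, True) stands for x, (x, False) for x^-1.\<close>

fun red_cons :: "('x \<times> bool) \<Rightarrow> ('x \<times> bool) list \<Rightarrow> ('x \<times> bool) list" where
  "red_cons a [] = [a]"
| "red_cons a (b # w) = (if fst a = fst b \<and> snd a \<noteq> snd b then w else a # b # w)"

definition reduce :: "('x \<times> bool) list \<Rightarrow> ('x \<times> bool) list" where
  "reduce w = foldr red_cons w []"

fun reduced :: "('x \<times> bool) list \<Rightarrow> bool" where
  "reduced [] = True"
| "reduced [a] = True"
| "reduced (a # b # w) = (\<not> (fst a = fst b \<and> snd a \<noteq> snd b) \<and> reduced (b # w))"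

definition free_group :: "'x set \<Rightarrow> ('x \<times> bool) list monoid" where
  "free_group B = \<lparr> partial_object.carrier = {w. fst ` set w \<subseteq> B \<and> reduced w},
                    monoid.mult = (\<lambda>u v. reduce (u @ v)),
                    monoid.one = [] \<rparr>"

definition free_gen :: "'x \<Rightarrow> ('x \<times> bool) list" where
  "free_gen x = [(x, True)]"

text \<open>Word length |r| of an element of the free group = length of the reduced word.\<close>

definition ham_dist :: "nat set \<Rightarrow> (nat \<Rightarrow> nat) \<Rightarrow> (nat \<Rightarrow> nat) \<Rightarrow> real" where
  "ham_dist \<Omega> \<sigma> \<tau> = real (card {w \<in> \<Omega>. \<sigma> w \<noteq> \<tau> w}) / real (card \<Omega>)"

text \<open>Finite sets Omega are taken as finite subsets of nat (every finite set is in
  bijection with one); Sym(Omega) is BijGroup Omega.\<close>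

definition valid_pair ::
  "'x set \<Rightarrow> ('g, 'm) monoid_scheme \<Rightarrow> (('x \<times> bool) list \<Rightarrow> 'g) \<Rightarrow> real \<Rightarrow> real
    \<Rightarrow> ('x \<times> bool) list set \<Rightarrow> bool" where
  "valid_pair B G \<pi> \<epsilon> \<delta> E \<longleftrightarrow>
     0 < \<delta> \<and> \<delta> \<le> 1 \<and> finite E \<and> E \<subseteq> kernel (free_group B) G \<pi> \<and>
     (\<forall>\<Omega> :: nat set. \<forall>\<rho>. finite \<Omega> \<longrightarrow> \<rho> \<in> hom (free_group B) (BijGroup \<Omega>) \<longrightarrow>
        (\<forall>r\<in>E. ham_dist \<Omega> (\<rho> r) id < \<delta>) \<longrightarrow>
        (\<exists>\<phi> \<in> hom G (BijGroup \<Omega>).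
           \<forall>x\<in>B. ham_dist \<Omega> (\<rho> (free_gen x)) (\<phi> (\<pi> (free_gen x))) < \<epsilon>))"

definition stable ::
  "'x set \<Rightarrow> ('g, 'm) monoid_scheme \<Rightarrow> (('x \<times> bool) list \<Rightarrow> 'g) \<Rightarrow> bool" where
  "stable B G \<pi> \<longleftrightarrow> (\<forall>\<epsilon>>0. \<exists>\<delta> E. valid_pair B G \<pi> \<epsilon> \<delta> E)"

definition word_set_norm :: "('x \<times> bool) list set \<Rightarrow> real" where
  "word_set_norm E = real (\<Sum>r\<in>E. length r)"

definition stability_fun ::
  "'x set \<Rightarrow> ('g, 'm) monoid_scheme \<Rightarrow> (('x \<times> bool) list \<Rightarrow> 'g) \<Rightarrow> real \<Rightarrow> real" where
  "stability_fun B G \<pi> x =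
     Inf {word_set_norm E / \<delta> | \<delta> E. valid_pair B G \<pi> (1 / x) \<delta> E}"

definition word_eval :: "('g, 'm) monoid_scheme \<Rightarrow> ('g \<times> bool) list \<Rightarrow> 'g" where
  "word_eval G w = foldr (\<lambda>(s, b) acc. (if b then s else inv\<^bsub>G\<^esub> s) \<otimes>\<^bsub>G\<^esub> acc) w \<one>\<^bsub>G\<^esub>"

definition word_ball :: "('g, 'm) monoid_scheme \<Rightarrow> 'g set \<Rightarrow> real \<Rightarrow> 'g set" where
  "word_ball G S t = {word_eval G w | w. fst ` set w \<subseteq> S \<and> real (length w) \<le> t}"

definition local_embedding ::
  "('g, 'm) monoid_scheme \<Rightarrow> 'g set \<Rightarrow> ('d, 'n) monoid_scheme \<Rightarrow> ('g \<Rightarrow> 'd) \<Rightarrow> bool" where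
  "local_embedding G A D \<psi> \<longleftrightarrow>
     inj_on \<psi> A \<and> \<psi> ` A \<subseteq> carrier D \<and>
     (\<forall>g\<in>A. \<forall>h\<in>A. g \<otimes>\<^bsub>G\<^esub> h \<in> A \<longrightarrow> \<psi> (g \<otimes>\<^bsub>G\<^esub> h) = \<psi> g \<otimes>\<^bsub>D\<^esub> \<psi> h)"

text \<open>Finite groups are represented by groups with carrier a subset of nat
  (every finite group is isomorphic to one).\<close>

definition LEF :: "('g, 'm) monoid_scheme \<Rightarrow> bool" where
  "LEF G \<longleftrightarrow> (\<forall>A. finite A \<longrightarrow> A \<subseteq> carrier G \<longrightarrow>
     (\<exists>D :: nat monoid. group D \<and> finite (carrier D) \<and> (\<exists>\<psi>. local_embedding G A D \<psi>)))"

definition LEF_growth :: "('g, 'm) monoid_scheme \<Rightarrow> 'g set \<Rightarrow> real \<Rightarrow> nat" where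
  "LEF_growth G S t = (LEAST n. \<exists>D :: nat monoid. group D \<and> finite (carrier D) \<and>
       card (carrier D) = n \<and> (\<exists>\<psi>. local_embedding G (word_ball G S t) D \<psi>))"

definition RF_growth :: "('g, 'm) monoid_scheme \<Rightarrow> 'g set \<Rightarrow> nat \<Rightarrow> nat" where
  "RF_growth G S l = (LEAST n. \<exists>D :: nat monoid. group D \<and> finite (carrier D) \<and>
       card (carrier D) = n \<and> (\<exists>h \<in> hom G D. inj_on h (word_ball G S (real l))))"

end

theory Submission
  imports Defs "HOL-Combinatorics.Permutations"
begin

lemma word_eval_Nil[simp]: "word_eval G [] = \<one>\<^bsub>G\<^esub>"
  by (simp add: word_eval_def)

lemma word_eval_Cons[simp]:
  "word_eval G ((s,b)#w) = (if b then s else inv\<^bsub>G\<^esub> s) \<otimes>\<^bsub>G\<^esub> word_eval G w"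
  by (simp add: word_eval_def)

lemma word_eval_closed:
  assumes "group G" "fst ` set w \<subseteq> carrier G"
  shows "word_eval G w \<in> carrier G"
  using assms(2)
proof (induction w)
  case Nil then show ?case using assms(1) by (simp add: group.is_monoid monoid.one_closed)
next
  case (Cons a w) then show ?case using assms(1)
    by (cases a) (auto simp: group.inv_closed monoid.m_closed group.is_monoid)
qed

lemma reduce_Nil[simp]: "reduce [] = []" by (simp add: reduce_def)
lemma reduce_Cons: "reduce (a#w) = red_cons a (reduce w)" by (simp add: reduce_def)

lemma reduced_tl: "reduced (a#w) \<Longrightarrow> reduced w"
  by (cases w) auto

lemma red_cons_reduced: "reduced (a#w) \<Longrightarrow> red_cons a w = a#w"
  by (cases w) auto

lemma reduce_reduced: "reduced w \<Longrightarrow> reduce w = w"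
  by (induction w) (auto simp: reduce_Cons reduced_tl red_cons_reduced)

lemma set_red_cons: "set (red_cons a w) \<subseteq> insert a (set w)"
  by (cases w) auto

lemma set_reduce: "set (reduce w) \<subseteq> set w"
  apply (induction w)
   apply (simp)
  using set_red_cons by (fastforce simp: reduce_Cons)

definition evl :: "('d, 'n) monoid_scheme \<Rightarrow> ('x \<Rightarrow> 'd) \<Rightarrow> ('x \<times> bool) list \<Rightarrow> 'd" where
  "evl D s w = word_eval D (map (\<lambda>(x,b). (s x, b)) w)"

lemma evl_Nil[simp]: "evl D s [] = \<one>\<^bsub>D\<^esub>" by (simp add: evl_def)
lemma evl_Cons: "evl D s (a#w) = (if snd a then s (fst a) else inv\<^bsub>D\<^esub> (s (fst a))) \<otimes>\<^bsub>D\<^esub> evl D s w"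
  by (cases a) (simp add: evl_def)

lemma evl_closed:
  assumes "group D" "\<forall>a\<in>set w. s (fst a) \<in> carrier D"
  shows "evl D s w \<in> carrier D"
  unfolding evl_def by (rule word_eval_closed[OF assms(1)]) (use assms(2) in auto)

lemma evl_append:
  assumes "group D" "\<forall>a\<in>set u. s (fst a) \<in> carrier D" "\<forall>a\<in>set v. s (fst a) \<in> carrier D"
  shows "evl D s (u @ v) = evl D s u \<otimes>\<^bsub>D\<^esub> evl D s v"
  using assms(2)
proof (induction u)
  case Nil then show ?case using evl_closed[OF assms(1) assms(3)] assms(1)
    by (simp add: group.is_monoid monoid.l_one)
next
  case (Cons a u)
  have c: "evl D s u \<in> carrier D" "evl D s v \<in> carrier D"
    using Cons.prems assms evl_closed by auto
  have l: "(if snd a then s (fst a) else inv\<^bsub>D\<^esub> (s (fst a))) \<in> carrier D"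
    using Cons.prems assms(1) by (auto simp: group.inv_closed)
  show ?case using Cons c l assms(1)
    by (simp add: evl_Cons group.is_monoid monoid.m_assoc)
qed

lemma evl_red_cons:
  assumes "group D" "s (fst a) \<in> carrier D" "\<forall>b\<in>set w. s (fst b) \<in> carrier D"
  shows "evl D s (red_cons a w) = evl D s (a#w)"
proof (cases w)
  case Nil then show ?thesis by simp
next
  case (Cons b w')
  show ?thesis
  proof (cases "fst a = fst b \<and> snd a \<noteq> snd b")
    case True
    have c: "evl D s w' \<in> carrier D" using assms Cons evl_closed by auto
    have sa: "s (fst a) \<in> carrier D" by fact
    show ?thesis using True Cons c sa assms(1)
      by (auto simp: evl_Cons group.is_monoid monoid.m_assoc[symmetric] group.inv_closed
          group.l_inv group.r_inv monoid.l_one)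
  next
    case False then show ?thesis using Cons by (simp only: red_cons.simps if_not_P[OF False] if_False)
  qed
qed

lemma evl_reduce:
  assumes "group D" "\<forall>a\<in>set w. s (fst a) \<in> carrier D"
  shows "evl D s (reduce w) = evl D s w"
  using assms(2)
proof (induction w)
  case Nil then show ?case by simp
next
  case (Cons a w)
  have "evl D s (reduce (a#w)) = evl D s (red_cons a (reduce w))" by (simp add: reduce_Cons)
  also have "\<dots> = evl D s (a # reduce w)"
    using Cons.prems set_reduce[of w] by (intro evl_red_cons[OF assms(1)]) auto
  also have "\<dots> = evl D s (a # w)" using Cons by (simp add: evl_Cons)
  finally show ?case .
qed



lemma free_carrier: "w \<in> carrier (free_group B) \<longleftrightarrow> fst ` set w \<subseteq> B \<and> reduced w"
  by (simp add: free_group_def)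
lemma free_mult: "u \<otimes>\<^bsub>free_group B\<^esub> v = reduce (u @ v)"
  by (simp add: free_group_def)
lemma free_one: "\<one>\<^bsub>free_group B\<^esub> = []"
  by (simp add: free_group_def)

lemma group_idem_one: "group G \<Longrightarrow> x \<in> carrier G \<Longrightarrow> x \<otimes>\<^bsub>G\<^esub> x = x \<Longrightarrow> x = \<one>\<^bsub>G\<^esub>"
  by (metis group.l_cancel_one group.is_monoid monoid.one_closed monoid.r_one)

lemma hom_free_Nil:
  assumes "group G" "\<pi> \<in> hom (free_group B) G"
  shows "\<pi> [] = \<one>\<^bsub>G\<^esub>"
proof -
  have c: "[] \<in> carrier (free_group B)" by (simp add: free_carrier)
  have "\<pi> [] = \<pi> [] \<otimes>\<^bsub>G\<^esub> \<pi> []"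
    using hom_mult[OF assms(2) c c] by (simp add: free_mult)
  moreover have "\<pi> [] \<in> carrier G" using assms(2) c by (auto simp: hom_def)
  ultimately show ?thesis using group_idem_one[OF assms(1)] by metis
qed

lemma pi_eval:
  assumes "group G" "\<pi> \<in> hom (free_group B) G" "w \<in> carrier (free_group B)"
  shows "\<pi> w = evl G (\<lambda>x. \<pi> (free_gen x)) w"
  using assms(3)
proof (induction w)
  case Nil then show ?case using hom_free_Nil[OF assms(1,2)] by simp
next
  case (Cons a w)
  obtain x b where a: "a = (x,b)" by (cases a)
  have wc: "w \<in> carrier (free_group B)" and xB: "x \<in> B"
    using Cons.prems reduced_tl a by (auto simp: free_carrier)
  have ac: "[a] \<in> carrier (free_group B)" using xB a by (simp add: free_carrier)
  have "a # w = reduce ([a] @ w)" using Cons.prems reduce_reduced[of "a#w"] by (simp add: free_carrier)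
  hence "\<pi> (a#w) = \<pi> [a] \<otimes>\<^bsub>G\<^esub> \<pi> w"
    using hom_mult[OF assms(2) ac wc] by (simp add: free_mult)
  moreover have "\<pi> [a] = (if b then \<pi> (free_gen x) else inv\<^bsub>G\<^esub> (\<pi> (free_gen x)))"
  proof (cases b)
    case True then show ?thesis using a by (simp add: free_gen_def)
  next
    case False
    have c1: "[(x,False)] \<in> carrier (free_group B)" "[(x,True)] \<in> carrier (free_group B)"
      using xB by (auto simp: free_carrier)
    have "\<pi> [(x,False)] \<otimes>\<^bsub>G\<^esub> \<pi> [(x,True)] = \<pi> []"
      using hom_mult[OF assms(2) c1] by (simp add: free_mult reduce_def)
    hence "\<pi> [(x,False)] \<otimes>\<^bsub>G\<^esub> \<pi> (free_gen x) = \<one>\<^bsub>G\<^esub>"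
      using hom_free_Nil[OF assms(1,2)] by (simp add: free_gen_def)
    moreover have "\<pi> [(x,False)] \<in> carrier G" "\<pi> (free_gen x) \<in> carrier G"
      using c1 assms(2) by (auto simp: hom_def free_gen_def)
    ultimately show ?thesis using False a group.inv_equality[OF assms(1)] by metis
  qed
  ultimately show ?case using Cons.IH[OF wc] a by (simp add: evl_Cons)
qed

lemma ball_mem:
  "fst ` set w \<subseteq> S \<Longrightarrow> real (length w) \<le> t \<Longrightarrow> word_eval G w \<in> word_ball G S t"
  by (auto simp: word_ball_def)

lemma ball_sub_carrier:
  assumes "group G" "S \<subseteq> carrier G"
  shows "word_ball G S t \<subseteq> carrier G"
  using word_eval_closed[OF assms(1)] assms(2) by (auto simp: word_ball_def)

lemma ball_mono: "t \<le> t' \<Longrightarrow> word_ball G S t \<subseteq> word_ball G S t'"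
  by (auto simp: word_ball_def)

locale lemb =
  fixes G :: "('g,'m) monoid_scheme" and D :: "('d,'n) monoid_scheme" and S t \<psi>
  assumes G: "group G" and D: "group D" and S: "S \<subseteq> carrier G" and t: "t \<ge> 1"
    and le: "local_embedding G (word_ball G S t) D \<psi>"
begin

lemma one_in: "\<one>\<^bsub>G\<^esub> \<in> word_ball G S t"
  using ball_mem[of "[]" S t G] t by simp

lemma psi_mult: "g \<in> word_ball G S t \<Longrightarrow> h \<in> word_ball G S t \<Longrightarrow> g \<otimes>\<^bsub>G\<^esub> h \<in> word_ball G S t
   \<Longrightarrow> \<psi> (g \<otimes>\<^bsub>G\<^esub> h) = \<psi> g \<otimes>\<^bsub>D\<^esub> \<psi> h"
  using le by (simp add: local_embedding_def)

lemma psi_carrier: "g \<in> word_ball G S t \<Longrightarrow> \<psi> g \<in> carrier D"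
  using le by (auto simp: local_embedding_def)

lemma psi_one: "\<psi> \<one>\<^bsub>G\<^esub> = \<one>\<^bsub>D\<^esub>"
proof -
  have "\<psi> \<one>\<^bsub>G\<^esub> = \<psi> \<one>\<^bsub>G\<^esub> \<otimes>\<^bsub>D\<^esub> \<psi> \<one>\<^bsub>G\<^esub>"
  proof -
    have "\<one>\<^bsub>G\<^esub> \<otimes>\<^bsub>G\<^esub> \<one>\<^bsub>G\<^esub> = \<one>\<^bsub>G\<^esub>" using G by (simp add: group.is_monoid monoid.l_one)
    then show ?thesis using psi_mult[OF one_in one_in] one_in by simp
  qed
  thus ?thesis using group_idem_one[OF D psi_carrier[OF one_in]] by metis
qed

lemma letter_in: "s \<in> S \<Longrightarrow> (if b then s else inv\<^bsub>G\<^esub> s) \<in> word_ball G S t"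
  using ball_mem[of "[(s,b)]" S t G] t S G by (simp add: group.is_monoid monoid.r_one group.inv_closed subsetD)

lemma psi_letter: "s \<in> S \<Longrightarrow> \<psi> (if b then s else inv\<^bsub>G\<^esub> s) = (if b then \<psi> s else inv\<^bsub>D\<^esub> (\<psi> s))"
proof (cases b)
  case True then show ?thesis by simp
next
  case False
  assume s: "s \<in> S"
  have sc: "s \<in> carrier G" using s S by auto
  have i1: "s \<in> word_ball G S t" "inv\<^bsub>G\<^esub> s \<in> word_ball G S t"
    using letter_in[OF s, of True] letter_in[OF s, of False] by auto
  have "\<psi> (inv\<^bsub>G\<^esub> s) \<otimes>\<^bsub>D\<^esub> \<psi> s = \<one>\<^bsub>D\<^esub>"
    using psi_mult[OF i1(2) i1(1)] psi_one G sc one_in by (simp add: group.l_inv)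
  hence "inv\<^bsub>D\<^esub> (\<psi> s) = \<psi> (inv\<^bsub>G\<^esub> s)"
    using group.inv_equality[OF D] psi_carrier i1 by metis
  then show ?thesis using False by simp
qed

lemma psi_word:
  assumes "fst ` set w \<subseteq> S" "real (length w) \<le> t"
  shows "\<psi> (word_eval G w) = word_eval D (map (\<lambda>(s,b). (\<psi> s, b)) w)"
  using assms
proof (induction w)
  case Nil then show ?case using psi_one by simp
next
  case (Cons a w)
  obtain s b where a: "a = (s,b)" by (cases a)
  have s: "s \<in> S" and ws: "fst ` set w \<subseteq> S" using Cons.prems a by auto
  have wt: "real (length w) \<le> t" using Cons.prems by simp
  have "\<psi> (word_eval G (a#w)) = \<psi> (if b then s else inv\<^bsub>G\<^esub> s) \<otimes>\<^bsub>D\<^esub> \<psi> (word_eval G w)"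
    using a psi_mult[OF letter_in[OF s, of b] ball_mem[OF ws wt, of G]] ball_mem[OF Cons.prems, of G] by simp
  then show ?case using Cons.IH[OF ws wt] psi_letter[OF s] a by simp
qed

end



lemma dis_comp:
  assumes "finite \<Omega>" "\<forall>w\<in>\<Omega>. \<tau>' w \<in> \<Omega>" "inj_on \<tau>' \<Omega>"
  shows "card {w\<in>\<Omega>. \<sigma> (\<tau> w) \<noteq> \<sigma>' (\<tau>' w)}
     \<le> card {w\<in>\<Omega>. \<tau> w \<noteq> \<tau>' w} + card {u\<in>\<Omega>. \<sigma> u \<noteq> \<sigma>' u}"
proof -
  let ?A = "{w\<in>\<Omega>. \<tau> w \<noteq> \<tau>' w}" and ?X = "{u\<in>\<Omega>. \<sigma> u \<noteq> \<sigma>' u}"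
  let ?Y = "{w\<in>\<Omega>. \<sigma> (\<tau>' w) \<noteq> \<sigma>' (\<tau>' w)}"
  have "{w\<in>\<Omega>. \<sigma> (\<tau> w) \<noteq> \<sigma>' (\<tau>' w)} \<subseteq> ?A \<union> ?Y" by auto
  hence "card {w\<in>\<Omega>. \<sigma> (\<tau> w) \<noteq> \<sigma>' (\<tau>' w)} \<le> card (?A \<union> ?Y)"
    using assms(1) by (intro card_mono) auto
  also have "\<dots> \<le> card ?A + card ?Y" by (rule card_Un_le)
  also have "card ?Y \<le> card ?X"
  proof (rule card_inj_on_le[where f = \<tau>'])
    show "inj_on \<tau>' ?Y" using assms(3) by (rule inj_on_subset) blast
    show "\<tau>' ` ?Y \<subseteq> ?X" using assms(2) by blast
    show "finite ?X" using assms(1) by simp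
  qed
  finally show ?thesis by simp
qed

lemma dis_inv:
  assumes "finite \<Omega>" "\<forall>w\<in>\<Omega>. \<sigma>' w \<in> \<Omega>" "\<forall>w\<in>\<Omega>. \<sigma> (\<sigma>' w) = w" "\<forall>w\<in>\<Omega>. \<tau>' (\<tau> w) = w"
  shows "card {w\<in>\<Omega>. \<sigma>' w \<noteq> \<tau>' w} \<le> card {u\<in>\<Omega>. \<sigma> u \<noteq> \<tau> u}"
proof (rule card_inj_on_le[where f = \<sigma>'])
  show "inj_on \<sigma>' {w\<in>\<Omega>. \<sigma>' w \<noteq> \<tau>' w}"
  proof (rule inj_onI)
    fix x y assume "x \<in> {w\<in>\<Omega>. \<sigma>' w \<noteq> \<tau>' w}" "y \<in> {w\<in>\<Omega>. \<sigma>' w \<noteq> \<tau>' w}" "\<sigma>' x = \<sigma>' y"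
    then show "x = y" using assms(3) by (metis (no_types, lifting) mem_Collect_eq)
  qed
  show "\<sigma>' ` {w\<in>\<Omega>. \<sigma>' w \<noteq> \<tau>' w} \<subseteq> {u\<in>\<Omega>. \<sigma> u \<noteq> \<tau> u}"
  proof
    fix u assume "u \<in> \<sigma>' ` {w\<in>\<Omega>. \<sigma>' w \<noteq> \<tau>' w}"
    then obtain w where w: "w \<in> \<Omega>" "\<sigma>' w \<noteq> \<tau>' w" "u = \<sigma>' w" by blast
    have u: "u \<in> \<Omega>" using w assms(2) by simp
    have su: "\<sigma> u = w" using w assms(3) by simp
    have "\<tau> u \<noteq> w"
    proof
      assume "\<tau> u = w"
      hence "\<tau>' w = u" using assms(4) u by metis
      thus False using w by simp
    qed
    then show "u \<in> {u\<in>\<Omega>. \<sigma> u \<noteq> \<tau> u}" using u su by simp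
  qed
  show "finite {u\<in>\<Omega>. \<sigma> u \<noteq> \<tau> u}" using assms(1) by simp
qed



lemma card_Bij_le:
  assumes fin: "finite \<Omega>"
  shows "card (Bij \<Omega>) \<le> fact (card \<Omega>)"
proof -
  define F where "F = (\<lambda>f x. if x \<in> \<Omega> then f x else x)"
  have injF: "inj_on F (Bij \<Omega>)"
  proof (rule inj_onI)
    fix f g assume f: "f \<in> Bij \<Omega>" and g: "g \<in> Bij \<Omega>" and fg: "F f = F g"
    have ef: "f \<in> extensional \<Omega>" using f by (rule Bij_imp_extensional)
    have eg: "g \<in> extensional \<Omega>" using g by (rule Bij_imp_extensional)
    show "f = g"
    proof
      fix x show "f x = g x"
      proof (cases "x \<in> \<Omega>")
        case True
        have "F f x = F g x" using fg by (rule fun_cong)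
        then show ?thesis using True unfolding F_def by simp
      next
        case False
        show ?thesis using extensional_arb[OF ef False] extensional_arb[OF eg False] by simp
      qed
    qed
  qed
  have imgF: "F ` Bij \<Omega> \<subseteq> {p. p permutes \<Omega>}"
  proof
    fix p assume "p \<in> F ` Bij \<Omega>"
    then obtain f where f: "f \<in> Bij \<Omega>" and pf: "p = F f" by blast
    have b: "bij_betw f \<Omega> \<Omega>" using f unfolding Bij_def by blast
    have "bij_betw p \<Omega> \<Omega> = bij_betw f \<Omega> \<Omega>"
      by (rule bij_betw_cong) (simp add: pf F_def)
    hence bp: "bij_betw p \<Omega> \<Omega>" using b by simp
    have fx: "\<And>x. x \<notin> \<Omega> \<Longrightarrow> p x = x" by (simp add: pf F_def)
    have "p permutes \<Omega>" by (rule bij_imp_permutes[OF bp fx])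
    then show "p \<in> {p. p permutes \<Omega>}" by simp
  qed
  have "card (Bij \<Omega>) \<le> card {p. p permutes \<Omega>}"
    by (rule card_inj_on_le[OF injF imgF finite_permutations[OF fin]])
  also have "\<dots> = fact (card \<Omega>)" by (rule card_permutations[OF refl fin])
  finally show ?thesis .
qed



lemma transport_group:
  assumes "group H" "finite (carrier H)"
  shows "\<exists>D :: nat monoid. group D \<and> finite (carrier D) \<and> card (carrier D) = card (carrier H) \<and>
           (\<exists>e \<in> hom H D. inj_on e (carrier H))"
proof -
  let ?n = "card (carrier H)"
  obtain e where e: "bij_betw e (carrier H) {0..<?n}"
    using ex_bij_betw_finite_nat[OF assms(2)] by (metis atLeast0LessThan)
  define e' where "e' = inv_into (carrier H) e"
  have e'b: "bij_betw e' {0..<?n} (carrier H)" unfolding e'_def by (rule bij_betw_inv_into[OF e])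
  have ee': "\<And>a. a \<in> {0..<?n} \<Longrightarrow> e (e' a) = a"
    unfolding e'_def using e by (meson bij_betw_inv_into_right)
  have e'e: "\<And>x. x \<in> carrier H \<Longrightarrow> e' (e x) = x"
    unfolding e'_def using e by (meson bij_betw_inv_into_left)
  have e'c: "\<And>a. a \<in> {0..<?n} \<Longrightarrow> e' a \<in> carrier H" using e'b bij_betwE by blast
  have ec: "\<And>x. x \<in> carrier H \<Longrightarrow> e x \<in> {0..<?n}" using e bij_betwE by blast
  have ec2: "\<And>x. x \<in> carrier H \<Longrightarrow> e x < ?n" using ec by simp
  have e'c2: "\<And>a. a < ?n \<Longrightarrow> e' a \<in> carrier H" using e'c by simp
  have ee'2: "\<And>a. a < ?n \<Longrightarrow> e (e' a) = a" using ee' by simp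
  define D :: "nat monoid" where
    "D = \<lparr>partial_object.carrier = {0..<?n}, monoid.mult = (\<lambda>a b. e (e' a \<otimes>\<^bsub>H\<^esub> e' b)), monoid.one = e \<one>\<^bsub>H\<^esub>\<rparr>"
  interpret H: group H by fact
  have gD: "group D"
  proof (rule groupI)
    show "\<And>x y. x \<in> carrier D \<Longrightarrow> y \<in> carrier D \<Longrightarrow> x \<otimes>\<^bsub>D\<^esub> y \<in> carrier D"
      by (simp add: D_def H.one_closed ec e'c ec2 e'c2)
    show "\<one>\<^bsub>D\<^esub> \<in> carrier D" by (simp add: D_def H.one_closed ec ec2)
    show "\<And>x y z. x \<in> carrier D \<Longrightarrow> y \<in> carrier D \<Longrightarrow> z \<in> carrier D \<Longrightarrow>
      x \<otimes>\<^bsub>D\<^esub> y \<otimes>\<^bsub>D\<^esub> z = x \<otimes>\<^bsub>D\<^esub> (y \<otimes>\<^bsub>D\<^esub> z)"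
      by (simp add: D_def e'e e'c e'c2 ec2 H.m_assoc)
    show "\<And>x. x \<in> carrier D \<Longrightarrow> \<one>\<^bsub>D\<^esub> \<otimes>\<^bsub>D\<^esub> x = x"
      by (simp add: D_def e'e e'c e'c2 ec2 ee' ee'2)
    show "\<And>x. x \<in> carrier D \<Longrightarrow> \<exists>y\<in>carrier D. y \<otimes>\<^bsub>D\<^esub> x = \<one>\<^bsub>D\<^esub>"
    proof -
      fix x assume x: "x \<in> carrier D"
      show "\<exists>y\<in>carrier D. y \<otimes>\<^bsub>D\<^esub> x = \<one>\<^bsub>D\<^esub>"
        by (rule bexI[where x = "e (inv\<^bsub>H\<^esub> (e' x))"]) (use x in \<open>simp_all add: D_def e'e e'c e'c2 ec2 ec\<close>)
    qed
  qed
  have "e \<in> hom H D" by (auto simp: hom_def D_def ec ec2 e'e)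
  moreover have "inj_on e (carrier H)" using e by (simp add: bij_betw_def)
  moreover have "card (carrier D) = ?n" by (simp add: D_def)
  ultimately show ?thesis using gD by (intro exI[of _ D]) (auto simp: D_def)
qed



lemma phi_facts:
  assumes G: "group G" and phi: "\<phi> \<in> hom G (BijGroup \<Omega>)"
  shows "\<And>g. g \<in> carrier G \<Longrightarrow> \<phi> g \<in> Bij \<Omega>"
    and "\<And>g w. g \<in> carrier G \<Longrightarrow> w \<in> \<Omega> \<Longrightarrow> \<phi> g w \<in> \<Omega>"
    and "\<And>g. g \<in> carrier G \<Longrightarrow> inj_on (\<phi> g) \<Omega>"
    and "\<And>g h w. g \<in> carrier G \<Longrightarrow> h \<in> carrier G \<Longrightarrow> w \<in> \<Omega> \<Longrightarrow> \<phi> (g \<otimes>\<^bsub>G\<^esub> h) w = \<phi> g (\<phi> h w)"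
    and "\<And>w. w \<in> \<Omega> \<Longrightarrow> \<phi> \<one>\<^bsub>G\<^esub> w = w"
proof -
  show B: "\<And>g. g \<in> carrier G \<Longrightarrow> \<phi> g \<in> Bij \<Omega>"
    using hom_in_carrier[OF phi] by (simp add: BijGroup_def)
  show "\<And>g w. g \<in> carrier G \<Longrightarrow> w \<in> \<Omega> \<Longrightarrow> \<phi> g w \<in> \<Omega>"
    using B Bij_imp_funcset by blast
  show "\<And>g. g \<in> carrier G \<Longrightarrow> inj_on (\<phi> g) \<Omega>"
    using B by (simp add: Bij_def bij_betw_def)
  show "\<And>g h w. g \<in> carrier G \<Longrightarrow> h \<in> carrier G \<Longrightarrow> w \<in> \<Omega> \<Longrightarrow> \<phi> (g \<otimes>\<^bsub>G\<^esub> h) w = \<phi> g (\<phi> h w)"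
    using hom_mult[OF phi] B by (simp add: BijGroup_def compose_def)
  show "\<And>w. w \<in> \<Omega> \<Longrightarrow> \<phi> \<one>\<^bsub>G\<^esub> w = w"
    using hom_one[OF phi G group_BijGroup] by (simp add: BijGroup_def)
qed

lemma approx:
  assumes G: "group G" and D: "group D" and fin: "finite (carrier D)"
    and S: "S \<subseteq> carrier G" and phi: "\<phi> \<in> hom G (BijGroup (carrier D))"
    and psiS: "\<forall>s\<in>S. \<psi> s \<in> carrier D"
    and close: "\<forall>s\<in>S. real (card {w\<in>carrier D. \<psi> s \<otimes>\<^bsub>D\<^esub> w \<noteq> \<phi> s w}) \<le> e"
    and ws: "fst ` set ws \<subseteq> S"
  shows "real (card {w\<in>carrier D. word_eval D (map (\<lambda>(s,b). (\<psi> s, b)) ws) \<otimes>\<^bsub>D\<^esub> w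
            \<noteq> \<phi> (word_eval G ws) w}) \<le> real (length ws) * e"
  using ws
proof (induction ws)
  case Nil
  have "{w\<in>carrier D. \<one>\<^bsub>D\<^esub> \<otimes>\<^bsub>D\<^esub> w \<noteq> \<phi> \<one>\<^bsub>G\<^esub> w} = {}"
    using phi_facts(5)[OF G phi] D by (auto simp: group.is_monoid monoid.l_one)
  then show ?case unfolding list.map word_eval_Nil list.size(3)
    by (simp only: card.empty)
next
  case (Cons a ws)
  obtain s b where a: "a = (s,b)" by (cases a)
  have s: "s \<in> S" and wsS: "fst ` set ws \<subseteq> S" using Cons.prems a by auto
  let ?\<Omega> = "carrier D"
  let ?lD = "if b then \<psi> s else inv\<^bsub>D\<^esub> (\<psi> s)"
  let ?lG = "if b then s else inv\<^bsub>G\<^esub> s"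
  let ?aw = "word_eval D (map (\<lambda>(s,b). (\<psi> s, b)) ws)"
  let ?gw = "word_eval G ws"
  have sc: "s \<in> carrier G" using s S by auto
  have psc: "\<psi> s \<in> carrier D" using s psiS by auto
  have lGc: "?lG \<in> carrier G" using sc G by (simp add: group.inv_closed)
  have lDc: "?lD \<in> carrier D" using psc D by (simp add: group.inv_closed)
  have awc: "?aw \<in> carrier D" by (rule word_eval_closed[OF D]) (use wsS psiS in \<open>auto simp: image_iff\<close>)
  have gwc: "?gw \<in> carrier G" by (rule word_eval_closed[OF G]) (use wsS S in blast)
  have eq: "{w\<in>?\<Omega>. word_eval D (map (\<lambda>(s,b). (\<psi> s, b)) (a#ws)) \<otimes>\<^bsub>D\<^esub> w \<noteq> \<phi> (word_eval G (a#ws)) w}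
      = {w\<in>?\<Omega>. ?lD \<otimes>\<^bsub>D\<^esub> (?aw \<otimes>\<^bsub>D\<^esub> w) \<noteq> \<phi> ?lG (\<phi> ?gw w)}"
    using a lDc awc D phi_facts(4)[OF G phi lGc gwc]
    by (auto simp: group.is_monoid monoid.m_assoc)
  have letter: "real (card {u\<in>?\<Omega>. ?lD \<otimes>\<^bsub>D\<^esub> u \<noteq> \<phi> ?lG u}) \<le> e"
  proof (cases b)
    case True then show ?thesis using close s by simp
  next
    case False
    have "card {u\<in>?\<Omega>. inv\<^bsub>D\<^esub> (\<psi> s) \<otimes>\<^bsub>D\<^esub> u \<noteq> \<phi> (inv\<^bsub>G\<^esub> s) u}
        \<le> card {u\<in>?\<Omega>. \<psi> s \<otimes>\<^bsub>D\<^esub> u \<noteq> \<phi> s u}"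
    proof (rule dis_inv[OF fin])
      show "\<forall>w\<in>?\<Omega>. inv\<^bsub>D\<^esub> (\<psi> s) \<otimes>\<^bsub>D\<^esub> w \<in> ?\<Omega>"
        using psc D by (simp add: group.inv_closed monoid.m_closed group.is_monoid)
      show "\<forall>w\<in>?\<Omega>. \<psi> s \<otimes>\<^bsub>D\<^esub> (inv\<^bsub>D\<^esub> (\<psi> s) \<otimes>\<^bsub>D\<^esub> w) = w"
      proof
        fix w assume w: "w \<in> ?\<Omega>"
        have "\<psi> s \<otimes>\<^bsub>D\<^esub> (inv\<^bsub>D\<^esub> (\<psi> s) \<otimes>\<^bsub>D\<^esub> w) = (\<psi> s \<otimes>\<^bsub>D\<^esub> inv\<^bsub>D\<^esub> (\<psi> s)) \<otimes>\<^bsub>D\<^esub> w"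
          using psc D w by (simp add: group.inv_closed group.is_monoid monoid.m_assoc)
        also have "\<dots> = w" using psc D w by (simp add: group.r_inv group.is_monoid monoid.l_one)
        finally show "\<psi> s \<otimes>\<^bsub>D\<^esub> (inv\<^bsub>D\<^esub> (\<psi> s) \<otimes>\<^bsub>D\<^esub> w) = w" .
      qed
      show "\<forall>w\<in>?\<Omega>. \<phi> (inv\<^bsub>G\<^esub> s) (\<phi> s w) = w"
        using phi_facts(4)[OF G phi] phi_facts(5)[OF G phi] sc G
        by (metis group.inv_closed group.l_inv)
    qed
    note le1 = this
    have le2: "real (card {u\<in>?\<Omega>. \<psi> s \<otimes>\<^bsub>D\<^esub> u \<noteq> \<phi> s u}) \<le> e" using close s by blast
    show ?thesis using False order_trans[OF iffD2[OF of_nat_le_iff le1] le2] by simp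
  qed
  have "card {w\<in>?\<Omega>. ?lD \<otimes>\<^bsub>D\<^esub> (?aw \<otimes>\<^bsub>D\<^esub> w) \<noteq> \<phi> ?lG (\<phi> ?gw w)}
     \<le> card {w\<in>?\<Omega>. ?aw \<otimes>\<^bsub>D\<^esub> w \<noteq> \<phi> ?gw w} + card {u\<in>?\<Omega>. ?lD \<otimes>\<^bsub>D\<^esub> u \<noteq> \<phi> ?lG u}"
    by (rule dis_comp[OF fin]) (use phi_facts(2,3)[OF G phi gwc] in auto)
  hence "real (card {w\<in>?\<Omega>. ?lD \<otimes>\<^bsub>D\<^esub> (?aw \<otimes>\<^bsub>D\<^esub> w) \<noteq> \<phi> ?lG (\<phi> ?gw w)})
     \<le> real (card {w\<in>?\<Omega>. ?aw \<otimes>\<^bsub>D\<^esub> w \<noteq> \<phi> ?gw w}) + real (card {u\<in>?\<Omega>. ?lD \<otimes>\<^bsub>D\<^esub> u \<noteq> \<phi> ?lG u})"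
    by linarith
  also have "\<dots> \<le> real (length ws) * e + e" using Cons.IH[OF wsS] letter by linarith
  finally show ?case using eq by (simp add: algebra_simps)
qed



lemma lmult_bij:
  assumes D: "group D" and a: "a \<in> carrier D"
  shows "bij_betw (\<lambda>w. a \<otimes>\<^bsub>D\<^esub> w) (carrier D) (carrier D)"
proof (rule bij_betwI[where g = "\<lambda>w. inv\<^bsub>D\<^esub> a \<otimes>\<^bsub>D\<^esub> w"])
  interpret D: group D by fact
  show "(\<lambda>w. a \<otimes>\<^bsub>D\<^esub> w) \<in> carrier D \<rightarrow> carrier D" using a by auto
  show "(\<lambda>w. inv\<^bsub>D\<^esub> a \<otimes>\<^bsub>D\<^esub> w) \<in> carrier D \<rightarrow> carrier D" using a by auto
  show "\<And>x. x \<in> carrier D \<Longrightarrow> inv\<^bsub>D\<^esub> a \<otimes>\<^bsub>D\<^esub> (a \<otimes>\<^bsub>D\<^esub> x) = x"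
    using a by (simp add: D.m_assoc[symmetric])
  show "\<And>y. y \<in> carrier D \<Longrightarrow> a \<otimes>\<^bsub>D\<^esub> (inv\<^bsub>D\<^esub> a \<otimes>\<^bsub>D\<^esub> y) = y"
    using a by (simp add: D.m_assoc[symmetric])
qed

lemma evl_map: "evl D (\<lambda>x. \<psi> (f x)) r = word_eval D (map (\<lambda>(s,b). (\<psi> s, b)) (map (\<lambda>(x,b). (f x, b)) r))"
  by (induction r) (auto simp: evl_def)

lemma finite_Bij: "finite \<Omega> \<Longrightarrow> finite (Bij \<Omega>)"
proof -
  assume f: "finite \<Omega>"
  have "Bij \<Omega> \<subseteq> Pi \<Omega> (\<lambda>_. \<Omega>) \<inter> extensional \<Omega>" using Bij_imp_funcset Bij_imp_extensional by blast
  hence "Bij \<Omega> \<subseteq> \<Omega> \<rightarrow>\<^sub>E \<Omega>" by (simp add: PiE_def)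
  moreover have "finite (\<Omega> \<rightarrow>\<^sub>E \<Omega>)" using f by (simp add: finite_PiE)
  ultimately show ?thesis by (rule finite_subset)
qed

lemma finite_ball:
  assumes "finite S"
  shows "finite (word_ball G S t)"
proof -
  have "word_ball G S t \<subseteq> word_eval G ` {w. set w \<subseteq> S \<times> UNIV \<and> length w \<le> nat \<lfloor>t\<rfloor>}"
  proof
    fix g assume "g \<in> word_ball G S t"
    then obtain w where w: "g = word_eval G w" "fst ` set w \<subseteq> S" "real (length w) \<le> t"
      by (auto simp: word_ball_def)
    have "length w \<le> nat \<lfloor>t\<rfloor>" using w(3) le_nat_floor by fastforce
    moreover have "set w \<subseteq> S \<times> UNIV" using w(2) by force
    ultimately show "g \<in> word_eval G ` {w. set w \<subseteq> S \<times> UNIV \<and> length w \<le> nat \<lfloor>t\<rfloor>}"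
      using w(1) by blast
  qed
  moreover have "finite {w. set w \<subseteq> S \<times> (UNIV :: bool set) \<and> length w \<le> nat \<lfloor>t\<rfloor>}"
    using assms by (intro finite_lists_length_le) simp
  ultimately show ?thesis by (meson finite_surj)
qed



theorem corollary2p15:
  fixes B :: "'x set" and G :: "('g, 'm) monoid_scheme"
    and \<pi> :: "('x \<times> bool) list \<Rightarrow> 'g" and C :: real
  assumes "group G"
    and "\<exists>A. finite A \<and> A \<subseteq> carrier G \<and> generate G A = carrier G"
    and "stable B G \<pi>"
    and "LEF G"
    and "finite B"
    and "\<pi> \<in> epi (free_group B) G"
    and "C \<ge> 1"
    and "\<forall>x::real. x \<ge> 1 \<longrightarrow> stability_fun B G \<pi> x \<le> C * x powr C"
  shows "\<exists>C'::real. C' > 0 \<and>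
     (\<forall>l::nat. l \<ge> 1 \<longrightarrow>
        fact (LEF_growth G (\<pi> ` free_gen ` B) (C' * real l powr C))
          \<ge> RF_growth G (\<pi> ` free_gen ` B) l)"
proof -
  let ?S = "\<pi> ` free_gen ` B"
  define C' where "C' = C * 3 powr C + 2"
  have C3: "C * 3 powr C \<ge> 0" using assms(7) by simp
  have C'pos: "C' > 0" unfolding C'_def using C3 by linarith
  have pihom: "\<pi> \<in> hom (free_group B) G" using assms(6) by (simp add: epi_def)
  have fgc: "\<And>x. x \<in> B \<Longrightarrow> free_gen x \<in> carrier (free_group B)"
    by (simp add: free_carrier free_gen_def)
  have Sc: "?S \<subseteq> carrier G" using hom_in_carrier[OF pihom] fgc by auto
  have finS: "finite ?S" using assms(5) by simp
  show ?thesis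
  proof (intro exI conjI allI impI)
    show "C' > 0" by (rule C'pos)
    fix l :: nat assume l: "l \<ge> 1"
    define t where "t = C' * real l powr C"
    define x where "x = 3 * real l"
    have x1: "x \<ge> 1" using l by (simp add: x_def)
    have lpow: "real l \<le> real l powr C"
      using powr_mono[of 1 C "real l"] assms(7) l by simp
    have xpow: "x powr C = 3 powr C * real l powr C" by (simp add: x_def powr_mult)
    have nn: "C * 3 powr C * real l powr C \<ge> 0" using C3 by simp
    have tdef: "t = C * 3 powr C * real l powr C + 2 * real l powr C"
      unfolding t_def C'_def by (simp add: distrib_right)
    have t1: "real l \<le> t" using lpow nn tdef by linarith
    have cx: "C * x powr C = C * 3 powr C * real l powr C" using xpow by simp
    have t2: "C * x powr C + 1 \<le> t" using lpow l cx tdef by linarith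
    have t3: "1 \<le> t" using t1 l by simp
    have ballc: "word_ball G ?S t \<subseteq> carrier G" by (rule ball_sub_carrier[OF assms(1) Sc])
    have "\<exists>D :: nat monoid. group D \<and> finite (carrier D) \<and> (\<exists>\<psi>. local_embedding G (word_ball G ?S t) D \<psi>)"
      using assms(4) finite_ball[OF finS] ballc unfolding LEF_def by blast
    hence "\<exists>n. \<exists>D :: nat monoid. group D \<and> finite (carrier D) \<and> card (carrier D) = n \<and>
       (\<exists>\<psi>. local_embedding G (word_ball G ?S t) D \<psi>)" by blast
    from LeastI_ex[OF this]
    obtain D :: "nat monoid" and \<psi> where D: "group D" "finite (carrier D)"
      "card (carrier D) = LEF_growth G ?S t" "local_embedding G (word_ball G ?S t) D \<psi>"
      unfolding LEF_growth_def by blast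
    interpret L: lemb G D ?S t \<psi>
      by (rule lemb.intro[OF assms(1) D(1) Sc t3 D(4)])
    let ?\<Omega> = "carrier D"
    have cardpos: "card ?\<Omega> > 0" using D(1,2)
      by (metis card_gt_0_iff empty_iff group.is_monoid monoid.one_closed)
    define sD where "sD = (\<lambda>x. \<psi> (\<pi> (free_gen x)))"
    have inS: "\<And>y. y \<in> B \<Longrightarrow> \<pi> (free_gen y) \<in> ?S" by blast
    have psiS: "\<forall>s\<in>?S. \<psi> s \<in> carrier D"
      using L.letter_in[of _ True] L.psi_carrier by simp
    have sDc: "\<forall>y\<in>B. sD y \<in> carrier D" using psiS inS by (simp add: sD_def)
    define \<rho> where "\<rho> = (\<lambda>w. \<lambda>\<omega>\<in>?\<Omega>. evl D sD w \<otimes>\<^bsub>D\<^esub> \<omega>)"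
    have evc: "\<And>w. w \<in> carrier (free_group B) \<Longrightarrow> evl D sD w \<in> carrier D"
      using evl_closed[OF D(1)] sDc by (force simp: free_carrier)
    have rhoB: "\<And>w. w \<in> carrier (free_group B) \<Longrightarrow> \<rho> w \<in> Bij ?\<Omega>"
    proof -
      fix w assume w: "w \<in> carrier (free_group B)"
      have "bij_betw (\<lambda>\<omega>. evl D sD w \<otimes>\<^bsub>D\<^esub> \<omega>) ?\<Omega> ?\<Omega>" by (rule lmult_bij[OF D(1) evc[OF w]])
      hence "bij_betw (\<rho> w) ?\<Omega> ?\<Omega>" unfolding \<rho>_def by (rule bij_betw_cong[THEN iffD1, rotated]) simp
      then show "\<rho> w \<in> Bij ?\<Omega>" by (simp add: Bij_def \<rho>_def)
    qed
    have rho_hom: "\<rho> \<in> hom (free_group B) (BijGroup ?\<Omega>)"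
    proof (rule homI)
      show "\<And>w. w \<in> carrier (free_group B) \<Longrightarrow> \<rho> w \<in> carrier (BijGroup ?\<Omega>)"
        using rhoB by (simp add: BijGroup_def)
      fix u v assume u: "u \<in> carrier (free_group B)" and v: "v \<in> carrier (free_group B)"
      have lu: "\<forall>a\<in>set u. sD (fst a) \<in> carrier D" and lv: "\<forall>a\<in>set v. sD (fst a) \<in> carrier D"
        using u v sDc by (auto simp: free_carrier)
      have "evl D sD (u \<otimes>\<^bsub>free_group B\<^esub> v) = evl D sD u \<otimes>\<^bsub>D\<^esub> evl D sD v"
        unfolding free_mult
      proof -
        have luv: "\<forall>a\<in>set (u@v). sD (fst a) \<in> carrier D" using lu lv by auto
        show "evl D sD (reduce (u @ v)) = evl D sD u \<otimes>\<^bsub>D\<^esub> evl D sD v"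
          using evl_reduce[OF D(1) luv] evl_append[OF D(1) lu lv] by simp
      qed
      hence "\<rho> (u \<otimes>\<^bsub>free_group B\<^esub> v) = compose ?\<Omega> (\<rho> u) (\<rho> v)"
        using evc[OF u] evc[OF v] D(1)
        by (auto simp: \<rho>_def compose_def group.is_monoid monoid.m_assoc monoid.m_closed)
      then show "\<rho> (u \<otimes>\<^bsub>free_group B\<^esub> v) = \<rho> u \<otimes>\<^bsub>BijGroup ?\<Omega>\<^esub> \<rho> v"
        using rhoB[OF u] rhoB[OF v] by (simp add: BijGroup_def)
    qed
    define Sx where "Sx = {word_set_norm E / \<delta> | \<delta> E. valid_pair B G \<pi> (1/x) \<delta> E}"
    have x0: "1 / x > 0" using x1 by simp
    obtain \<delta>0 E0 where "valid_pair B G \<pi> (1/x) \<delta>0 E0" using assms(3) x0 unfolding stable_def by blast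
    hence "word_set_norm E0 / \<delta>0 \<in> Sx" unfolding Sx_def by blast
    hence Sne: "Sx \<noteq> {}" by blast
    have "stability_fun B G \<pi> x \<le> C * x powr C" using assms(8) x1 by blast
    hence "Inf Sx \<le> C * x powr C" unfolding stability_fun_def Sx_def .
    hence "Inf Sx < C * x powr C + 1" by simp
    from cInf_lessD[OF Sne this] obtain v where v: "v \<in> Sx" "v < C * x powr C + 1" by blast
    then obtain \<delta> E where vp: "valid_pair B G \<pi> (1/x) \<delta> E" and vdef: "v = word_set_norm E / \<delta>"
      unfolding Sx_def by blast
    note vpu = vp[unfolded valid_pair_def]
    have \<delta>: "0 < \<delta>" "\<delta> \<le> 1" and finE: "finite E" and Eker: "E \<subseteq> kernel (free_group B) G \<pi>"
      using vpu[THEN conjunct1] vpu[THEN conjunct2, THEN conjunct1]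
        vpu[THEN conjunct2, THEN conjunct2, THEN conjunct1]
        vpu[THEN conjunct2, THEN conjunct2, THEN conjunct2, THEN conjunct1] by auto
    have Elen: "\<forall>r\<in>E. real (length r) \<le> t"
    proof
      fix r assume r: "r \<in> E"
      have "length r \<le> (\<Sum>r\<in>E. length r)" by (rule member_le_sum[OF r _ finE]) simp
      hence "real (length r) \<le> word_set_norm E" unfolding word_set_norm_def by linarith
      also have "\<dots> \<le> word_set_norm E / \<delta>"
      proof -
        have "word_set_norm E \<ge> 0" unfolding word_set_norm_def by (rule of_nat_0_le_iff)
        then show ?thesis using \<delta> by (simp add: le_divide_eq mult_left_le)
      qed
      finally show "real (length r) \<le> t" using v vdef t2 by linarith
    qed
    have rho_E: "\<forall>r\<in>E. ham_dist ?\<Omega> (\<rho> r) id < \<delta>"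
    proof
      fix r assume r: "r \<in> E"
      have rc: "r \<in> carrier (free_group B)" and pr: "\<pi> r = \<one>\<^bsub>G\<^esub>"
        using Eker r by (auto simp: kernel_def)
      have rS: "fst ` set (map (\<lambda>(x,b). (\<pi> (free_gen x), b)) r) \<subseteq> ?S"
        using rc by (force simp: free_carrier)
      have rl: "real (length (map (\<lambda>(x,b). (\<pi> (free_gen x), b)) r)) \<le> t" using Elen r by simp
      have "evl D sD r = word_eval D (map (\<lambda>(s,b). (\<psi> s, b)) (map (\<lambda>(x,b). (\<pi> (free_gen x), b)) r))"
        unfolding sD_def by (rule evl_map)
      also have "\<dots> = \<psi> (word_eval G (map (\<lambda>(x,b). (\<pi> (free_gen x), b)) r))"
        by (rule L.psi_word[OF rS rl, symmetric])
      also have "word_eval G (map (\<lambda>(x,b). (\<pi> (free_gen x), b)) r) = \<pi> r"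
        using pi_eval[OF assms(1) pihom rc] by (simp add: evl_def)
      finally have "evl D sD r = \<one>\<^bsub>D\<^esub>" using pr L.psi_one by simp
      hence empt: "{\<omega>\<in>?\<Omega>. \<rho> r \<omega> \<noteq> id \<omega>} = {}" using D(1) by (auto simp: \<rho>_def group.is_monoid monoid.l_one)
      have c0: "card {\<omega>\<in>?\<Omega>. \<rho> r \<omega> \<noteq> id \<omega>} = 0" by (subst empt) (rule card.empty)
      show "ham_dist ?\<Omega> (\<rho> r) id < \<delta>" using \<delta> unfolding ham_dist_def c0 by simp
    qed
    obtain \<phi> where phi: "\<phi> \<in> hom G (BijGroup ?\<Omega>)"
      and phiclose: "\<forall>y\<in>B. ham_dist ?\<Omega> (\<rho> (free_gen y)) (\<phi> (\<pi> (free_gen y))) < 1/x"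
    proof -
      have main: "\<forall>\<Omega> :: nat set. \<forall>\<rho>. finite \<Omega> \<longrightarrow> \<rho> \<in> hom (free_group B) (BijGroup \<Omega>) \<longrightarrow>
        (\<forall>r\<in>E. ham_dist \<Omega> (\<rho> r) id < \<delta>) \<longrightarrow>
        (\<exists>\<phi> \<in> hom G (BijGroup \<Omega>).
           \<forall>y\<in>B. ham_dist \<Omega> (\<rho> (free_gen y)) (\<phi> (\<pi> (free_gen y))) < 1/x)"
        using vpu[THEN conjunct2, THEN conjunct2, THEN conjunct2, THEN conjunct2] .
      have "\<exists>\<phi> \<in> hom G (BijGroup ?\<Omega>).
           \<forall>y\<in>B. ham_dist ?\<Omega> (\<rho> (free_gen y)) (\<phi> (\<pi> (free_gen y))) < 1/x"
        using main D(2) rho_hom rho_E by blast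
      then show ?thesis using that by blast
    qed
    define e where "e = real (card ?\<Omega>) / x"
    have close: "\<forall>s\<in>?S. real (card {w\<in>?\<Omega>. \<psi> s \<otimes>\<^bsub>D\<^esub> w \<noteq> \<phi> s w}) \<le> e"
    proof
      fix s assume "s \<in> ?S"
      then obtain y where y: "y \<in> B" "s = \<pi> (free_gen y)" by blast
      have "\<And>\<omega>. \<omega> \<in> ?\<Omega> \<Longrightarrow> \<rho> (free_gen y) \<omega> = \<psi> s \<otimes>\<^bsub>D\<^esub> \<omega>"
        using sDc y D(1) by (simp add: \<rho>_def free_gen_def evl_Cons sD_def group.is_monoid monoid.r_one)
      hence eq: "{\<omega>\<in>?\<Omega>. \<rho> (free_gen y) \<omega> \<noteq> \<phi> (\<pi> (free_gen y)) \<omega>} = {w\<in>?\<Omega>. \<psi> s \<otimes>\<^bsub>D\<^esub> w \<noteq> \<phi> s w}"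
        using y by auto
      have "real (card {w\<in>?\<Omega>. \<psi> s \<otimes>\<^bsub>D\<^esub> w \<noteq> \<phi> s w}) / real (card ?\<Omega>) < 1 / x"
      proof -
        have hd: "ham_dist ?\<Omega> (\<rho> (free_gen y)) (\<phi> (\<pi> (free_gen y))) < 1/x" using phiclose y(1) by blast
        show ?thesis using hd[unfolded ham_dist_def eq] .
      qed
      then show "real (card {w\<in>?\<Omega>. \<psi> s \<otimes>\<^bsub>D\<^esub> w \<noteq> \<phi> s w}) \<le> e"
        using cardpos x1 unfolding e_def by (simp add: divide_simps) 
    qed
    have inj: "inj_on \<phi> (word_ball G ?S (real l))"
    proof (rule inj_onI)
      fix g h assume g: "g \<in> word_ball G ?S (real l)" and h: "h \<in> word_ball G ?S (real l)"
        and gh: "\<phi> g = \<phi> h"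
      obtain wg where wg: "g = word_eval G wg" "fst ` set wg \<subseteq> ?S" "real (length wg) \<le> real l"
        using g by (auto simp: word_ball_def)
      obtain wh where wh: "h = word_eval G wh" "fst ` set wh \<subseteq> ?S" "real (length wh) \<le> real l"
        using h by (auto simp: word_ball_def)
      let ?a = "word_eval D (map (\<lambda>(s,b). (\<psi> s, b)) wg)"
      let ?b = "word_eval D (map (\<lambda>(s,b). (\<psi> s, b)) wh)"
      have ac: "?a \<in> carrier D" by (rule word_eval_closed[OF D(1)]) (use wg(2) psiS in \<open>auto simp: image_iff\<close>)
      have bc: "?b \<in> carrier D" by (rule word_eval_closed[OF D(1)]) (use wh(2) psiS in \<open>auto simp: image_iff\<close>)
      have le_e: "real l * e = real (card ?\<Omega>) / 3" unfolding e_def x_def using l by simp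
      have "real (card {w\<in>?\<Omega>. ?a \<otimes>\<^bsub>D\<^esub> w \<noteq> \<phi> g w}) \<le> real (length wg) * e"
        using approx[OF assms(1) D(1) D(2) Sc _ psiS close wg(2)] phi wg(1) by simp
      also have "\<dots> \<le> real l * e"
        using wg(3) cardpos x1 unfolding e_def by (intro mult_right_mono) auto
      finally have A: "real (card {w\<in>?\<Omega>. ?a \<otimes>\<^bsub>D\<^esub> w \<noteq> \<phi> g w}) \<le> real (card ?\<Omega>) / 3" using le_e by simp
      have "real (card {w\<in>?\<Omega>. ?b \<otimes>\<^bsub>D\<^esub> w \<noteq> \<phi> h w}) \<le> real (length wh) * e"
        using approx[OF assms(1) D(1) D(2) Sc _ psiS close wh(2)] phi wh(1) by simp
      also have "\<dots> \<le> real l * e"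
        using wh(3) cardpos x1 unfolding e_def by (intro mult_right_mono) auto
      finally have Bd: "real (card {w\<in>?\<Omega>. ?b \<otimes>\<^bsub>D\<^esub> w \<noteq> \<phi> h w}) \<le> real (card ?\<Omega>) / 3" using le_e by simp
      have sub: "{w\<in>?\<Omega>. ?a \<otimes>\<^bsub>D\<^esub> w \<noteq> ?b \<otimes>\<^bsub>D\<^esub> w} \<subseteq>
          {w\<in>?\<Omega>. ?a \<otimes>\<^bsub>D\<^esub> w \<noteq> \<phi> g w} \<union> {w\<in>?\<Omega>. ?b \<otimes>\<^bsub>D\<^esub> w \<noteq> \<phi> h w}"
        using gh by auto
      have "card {w\<in>?\<Omega>. ?a \<otimes>\<^bsub>D\<^esub> w \<noteq> ?b \<otimes>\<^bsub>D\<^esub> w} \<le>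
          card ({w\<in>?\<Omega>. ?a \<otimes>\<^bsub>D\<^esub> w \<noteq> \<phi> g w} \<union> {w\<in>?\<Omega>. ?b \<otimes>\<^bsub>D\<^esub> w \<noteq> \<phi> h w})"
        using D(2) by (intro card_mono[OF _ sub]) simp
      also have "\<dots> \<le> card {w\<in>?\<Omega>. ?a \<otimes>\<^bsub>D\<^esub> w \<noteq> \<phi> g w} + card {w\<in>?\<Omega>. ?b \<otimes>\<^bsub>D\<^esub> w \<noteq> \<phi> h w}"
        by (rule card_Un_le)
      finally have "real (card {w\<in>?\<Omega>. ?a \<otimes>\<^bsub>D\<^esub> w \<noteq> ?b \<otimes>\<^bsub>D\<^esub> w}) < real (card ?\<Omega>)"
        using A Bd cardpos by linarith
      hence "{w\<in>?\<Omega>. ?a \<otimes>\<^bsub>D\<^esub> w \<noteq> ?b \<otimes>\<^bsub>D\<^esub> w} \<noteq> ?\<Omega>" by auto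
      then obtain w where w: "w \<in> ?\<Omega>" "?a \<otimes>\<^bsub>D\<^esub> w = ?b \<otimes>\<^bsub>D\<^esub> w" by blast
      hence ab: "?a = ?b" using ac bc D(1) by (simp add: group.right_cancel)
      have gt: "g \<in> word_ball G ?S t" and ht: "h \<in> word_ball G ?S t"
        using g h ball_mono[OF t1, of G ?S] by auto
      have "\<psi> g = \<psi> h" using L.psi_word[OF wg(2)] L.psi_word[OF wh(2)] wg wh t1 ab by simp
      then show "g = h" using D(4) gt ht by (simp add: local_embedding_def inj_on_def)
    qed
    obtain D' :: "nat monoid" and e' where D': "group D'" "finite (carrier D')"
      "card (carrier D') = card (carrier (BijGroup ?\<Omega>))" "e' \<in> hom (BijGroup ?\<Omega>) D'"
      "inj_on e' (carrier (BijGroup ?\<Omega>))"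
    proof -
      have fB: "finite (carrier (BijGroup ?\<Omega>))" using finite_Bij[OF D(2)] by (simp add: BijGroup_def)
      show ?thesis using transport_group[OF group_BijGroup fB] that by blast
    qed
    have hc: "e' \<circ> \<phi> \<in> hom G D'" by (rule hom_compose[OF phi D'(4)])
    have imgsub: "\<phi> ` word_ball G ?S (real l) \<subseteq> carrier (BijGroup ?\<Omega>)"
      using hom_in_carrier[OF phi] ball_sub_carrier[OF assms(1) Sc] by blast
    have ic: "inj_on (e' \<circ> \<phi>) (word_ball G ?S (real l))"
      by (rule comp_inj_on[OF inj inj_on_subset[OF D'(5) imgsub]])
    have "RF_growth G ?S l \<le> card (carrier D')"
      unfolding RF_growth_def by (rule Least_le) (use D' hc ic in blast)
    also have "\<dots> \<le> fact (card ?\<Omega>)" using D'(3) card_Bij_le[OF D(2)] by (simp add: BijGroup_def)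
    finally show "fact (LEF_growth G ?S (C' * real l powr C)) \<ge> RF_growth G ?S l"
      using D(3) by (simp add: t_def)
  qed
qed


end
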